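(* Let $n\ge 1$, $m=4+n$, and consider pure $SU(N)$ Yang–Mills theory on the flat manifold $\mathcal{M}^m=\mathcal{M}^4\times\mathcal{N}^n$, where $\mathcal{N}^n=S^1/Z_2\times\cdots\times S^1/Z_2$ ($n$ copies, with circles of radii $R_1,\dots,R_n$), with Lagrangian $\mathcal{L}_{YM}=-\tfrac14\mathcal{F}^a_{MN}\mathcal{F}_a^{MN}$, gauge fields $\mathcal{A}^a_M(x,y)$ and canonical momenta $\pi^M_a=\mathcal{F}^{M0}_a$. Its primary constraints are $\phi^{(1)}_a=\pi^0_a\approx 0$. Under the canonical transformation defined by the Fourier (Kaluza–Klein) expansions of the fields and momenta described in the context, the set of primary constraints $\pi^0_a(x,y)\approx 0$ of the $m$-dimensional theory is mapped faithfully (i.e. equivalently, in both directions) onto the set of primary constraints $$\phi^{(1)(0,\dots,0)}_a=\pi^{(0,\dots,0)0}_a\approx0,\qquad \phi^{(1)(\underline m_1,\dots,\underline m_n)}_a=\pi^{(\underline m_1,\dots,\underline m_n)0}_a\approx 0$$ for all $(\underline m_1,\dots,\underline m_n)\in\mathbb{Z}_{\ge0}^n\setminus\{(0,\dots,0)\}$ and all $a$, which are the primary constraints of the compactified four-dimensional theory.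
   Context: Coordinates are $(x,y)$ with $x\in\mathcal{M}^4$ (indices $\mu=0,1,2,3$) and $y=(y^1,\dots,y^n)$ the extra coordinates (indices $\bar\mu=5,\dots,4+n$). Fields are periodic, $\mathcal{A}^a_M(x,y+R)=\mathcal{A}^a_M(x,y)$ with $R=(R_1,\dots,R_n)$, and satisfy parity conditions $\mathcal{A}^a_\mu(x,-y)=\mathcal{A}^a_\mu(x,y)$, $\mathcal{A}^a_{\bar\mu}(x,-y)=-\mathcal{A}^a_{\bar\mu}(x,y)$. Writing $\theta_{\underline m}(y)=2\pi\sum_{i=1}^n \underline m_i y^i/R_i$ and $P=\prod_{i}R_i$, and letting $\sum'$ denote the sum over all $(\underline m_1,\dots,\underline m_n)\in\mathbb{Z}_{\ge0}^n$ except $(0,\dots,0)$, the expansions are $\mathcal{A}^a_\mu=P^{-1/2}A^{(0,\dots,0)a}_\mu(x)+(2/P)^{1/2}\sum' A^{(\underline m)a}_\mu(x)\cos\theta_{\underline m}(y)$, $\mathcal{A}^a_{\bar\mu}=(2/P)^{1/2}\sum' A^{(\underline m)a}_{\bar\mu}(x)\sin\theta_{\underline m}(y)$, and identically for momenta: $\pi^\mu_a=P^{-1/2}\pi^{(0,\dots,0)\mu}_a(x)+(2/P)^{1/2}\sum'\pi^{(\underline m)\mu}_a(x)\cos\theta_{\underline m}(y)$, $\pi^{\bar\mu}_a=(2/P)^{1/2}\sum'\pi^{(\underline m)\bar\mu}_a(x)\sin\theta_{\underline m}(y)$. The pairs $(A^{(\cdot)a}_M,\pi^{(\cdot)M}_a)$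 are the canonical pairs of the compactified theory obtained by integrating the Lagrangian over $y\in\prod_i[0,R_i]$. *)

theory Defs
  imports "HOL-Analysis.Analysis"
begin

definition kk_theta :: "real^'n \<Rightarrow> ('n::finite \<Rightarrow> nat) \<Rightarrow> real^'n \<Rightarrow> real" where
  "kk_theta R k y = 2 * pi * (\<Sum>i\<in>UNIV. real (k i) * (y $ i) / (R $ i))"

definition kk_vol :: "real^'n::finite \<Rightarrow> real" where
  "kk_vol R = (\<Prod>i\<in>UNIV. R $ i)"

definition kk_weight :: "real^'n::finite \<Rightarrow> ('n \<Rightarrow> nat) \<Rightarrow> real" where
  "kk_weight R k = (if k = (\<lambda>_. 0) then 1 / sqrt (kk_vol R) else sqrt (2 / kk_vol R))"

text \<open>Cosine (parity-even) KK expansion of a momentum component pi^0_a(x,y) in its modes.\<close>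
definition kk_cos_expansion ::
  "real^'n::finite \<Rightarrow> (('n \<Rightarrow> nat) \<Rightarrow> real) \<Rightarrow> real^'n \<Rightarrow> real \<Rightarrow> bool" where
  "kk_cos_expansion R c y v \<longleftrightarrow>
     ((\<lambda>k. kk_weight R k * c k * cos (kk_theta R k y)) has_sum v) UNIV"

end

theory Submission
  imports Defs "HOL-Library.FuncSet"
begin

lemma has_sum_fsum:
  fixes f :: "'i \<Rightarrow> 'a \<Rightarrow> real"
  assumes "finite I" "\<And>i. i \<in> I \<Longrightarrow> (f i has_sum s i) A"
  shows "((\<lambda>x. \<Sum>i\<in>I. f i x) has_sum (\<Sum>i\<in>I. s i)) A"
  using assms
proof (induction I rule: finite_induct)
  case empty then show ?case by simp
next
  case (insert i I)
  have "((\<lambda>x. f i x + (\<Sum>i\<in>I. f i x)) has_sum (s i + (\<Sum>i\<in>I. s i))) A"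
    by (rule has_sum_add) (use insert in auto)
  then show ?case using insert by simp
qed

lemma geom_root_sum:
  fixes v :: int and M :: nat
  assumes "M > 0"
  shows "(\<Sum>t<M. exp (complex_of_real (2*pi*real_of_int v * real t / real M) * \<i>))
        = (if int M dvd v then of_nat M else 0)"
proof -
  define z where "z = exp (complex_of_real (2*pi*real_of_int v / real M) * \<i>)"
  have pw: "exp (complex_of_real (2*pi*real_of_int v * real t / real M) * \<i>) = z ^ t" for t
    unfolding z_def by (simp add: exp_of_nat_mult[symmetric] field_simps)
  show ?thesis
  proof (cases "int M dvd v")
    case True
    then obtain q where q: "v = int M * q" by (auto elim: dvdE)
    have "z = exp (complex_of_real (2*pi*real_of_int q) * \<i>)"
      unfolding z_def q using assms by (simp add: mult.assoc)
    also have "\<dots> = 1" by (subst exp_eq_1) (auto intro!: exI[of _ q])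
    finally show ?thesis using True pw by simp
  next
    case False
    have zM: "z ^ M = 1"
    proof -
      have "z ^ M = exp (complex_of_real (2*pi*real_of_int v) * \<i>)"
        unfolding z_def exp_of_nat_mult[symmetric] using assms by (simp add: field_simps)
      also have "\<dots> = 1" by (subst exp_eq_1) (auto intro!: exI[of _ v])
      finally show ?thesis .
    qed
    have z1: "z \<noteq> 1"
    proof
      assume "z = 1"
      then obtain n :: int where n: "2*pi*real_of_int v / real M = of_int (2*n) * pi"
        unfolding z_def by (subst (asm) exp_eq_1) auto
      then have "real_of_int v = real_of_int (int M * n)" using assms by (simp add: field_simps)
      then have "v = int M * n" by linarith
      then show False using False by simp
    qed
    have "(\<Sum>t<M. z ^ t) = 0"
      using z1 zM by (simp add: geometric_sum)
    then show ?thesis using False pw by simp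
  qed
qed

lemma grid_sum:
  fixes v :: "'n::finite \<Rightarrow> int" and M :: nat
  assumes "M > 0"
  shows "(\<Sum>j\<in>PiE UNIV (\<lambda>_. {..<M}). cos (2*pi*(\<Sum>i\<in>UNIV. real_of_int (v i) * real (j i)) / real M))
        = (if \<forall>i. int M dvd v i then real M ^ CARD('n) else 0)"
proof -
  define f where "f i t = exp (complex_of_real (2*pi*real_of_int (v i) * real t / real M) * \<i>)" for i t
  have e: "cos (2*pi*(\<Sum>i\<in>UNIV. real_of_int (v i) * real (j i)) / real M) = Re (\<Prod>i\<in>UNIV. f i (j i))" for j
  proof -
    have "(\<Prod>i\<in>UNIV. f i (j i)) = exp (\<Sum>i\<in>UNIV. complex_of_real (2*pi*real_of_int (v i) * real (j i) / real M) * \<i>)"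
      unfolding f_def by (simp add: exp_sum)
    also have "(\<Sum>i\<in>UNIV. complex_of_real (2*pi*real_of_int (v i) * real (j i) / real M) * \<i>)
       = complex_of_real (2*pi*(\<Sum>i\<in>UNIV. real_of_int (v i) * real (j i)) / real M) * \<i>"
      by (simp add: sum_distrib_left sum_distrib_right sum_divide_distrib mult.assoc)
    finally show ?thesis by (simp add: Re_exp)
  qed
  have "(\<Sum>j\<in>PiE UNIV (\<lambda>_. {..<M}). Re (\<Prod>i\<in>UNIV. f i (j i)))
      = Re (\<Sum>j\<in>PiE UNIV (\<lambda>_. {..<M}). (\<Prod>i\<in>UNIV. f i (j i)))" by simp
  also have "(\<Sum>j\<in>PiE UNIV (\<lambda>_. {..<M}). (\<Prod>i\<in>UNIV. f i (j i))) = (\<Prod>i\<in>UNIV. \<Sum>t<M. f i t)"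
    by (rule prod_sum_PiE[symmetric]) auto
  also have "\<dots> = (\<Prod>i\<in>UNIV. if int M dvd v i then of_nat M else 0)"
    unfolding f_def using geom_root_sum[OF assms] by simp
  also have "\<dots> = (if \<forall>i. int M dvd v i then of_nat M ^ CARD('n) else 0)"
  proof (cases "\<forall>i. int M dvd v i")
    case False
    then obtain i0 where "\<not> int M dvd v i0" by auto
    have "(\<Prod>i::'n\<in>UNIV. if int M dvd v i then (of_nat M::complex) else 0) = 0"
      by (rule prod_zero) (use \<open>\<not> int M dvd v i0\<close> in auto)
    then show ?thesis using False by simp
  next
    case True
    have "(\<Prod>i::'n\<in>UNIV. if int M dvd v i then (of_nat M::complex) else 0) = (\<Prod>i::'n\<in>UNIV. of_nat M)"
      proof -
      have "\<And>i::'n. (if int M dvd v i then (of_nat M::complex) else 0) = of_nat M" using True by simp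
      then show ?thesis by (simp only:)
    qed
    then show ?thesis using True by (simp only: prod_constant) simp
  qed
  finally have "(\<Sum>j\<in>PiE UNIV (\<lambda>_. {..<M}). Re (\<Prod>i\<in>UNIV. f i (j i))) = Re (if \<forall>i. int M dvd v i then of_nat M ^ CARD('n) else 0)" .
  then show ?thesis unfolding e by (simp only: if_distrib) simp
qed

lemma tail_small:
  fixes h :: "'a \<Rightarrow> real"
  assumes "\<And>k. h k \<ge> 0" "h summable_on UNIV" "\<epsilon> > 0"
  shows "\<exists>F. finite F \<and> (\<forall>G. finite G \<longrightarrow> G \<inter> F = {} \<longrightarrow> sum h G \<le> \<epsilon>)"
proof -
  obtain F where F: "finite F" "dist (sum h F) (infsum h UNIV) \<le> \<epsilon>"
    using infsum_finite_approximation[OF assms(2,3)] by auto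
  have "sum h G \<le> \<epsilon>" if "finite G" "G \<inter> F = {}" for G
  proof -
    have "sum h (F \<union> G) = infsum h (F \<union> G)" using F that by simp
    also have "\<dots> \<le> infsum h UNIV"
      by (rule infsum_mono_neutral) (use F that assms in auto)
    finally have "sum h F + sum h G \<le> infsum h UNIV"
      using F that by (metis inf_commute sum.union_disjoint)
    then show ?thesis using F(2) by (simp add: dist_real_def)
  qed
  then show ?thesis using F by blast
qed

definition grid :: "nat \<Rightarrow> ('n::finite \<Rightarrow> nat) set" where
  "grid M = PiE UNIV (\<lambda>_. {..<M})"

definition gpt :: "real^'n::finite \<Rightarrow> nat \<Rightarrow> ('n \<Rightarrow> nat) \<Rightarrow> real^'n" where
  "gpt R M j = (\<chi> i. R $ i * real (j i) / real M)"

lemma theta_gpt: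
  assumes "\<And>i. R $ i > 0"
  shows "kk_theta R k (gpt R M j) = 2*pi*(\<Sum>i\<in>UNIV. real (k i) * real (j i)) / real M"
proof -
  have "real (k i) * (gpt R M j $ i) / (R $ i) = real (k i) * real (j i) / real M" for i
    using assms[of i] unfolding gpt_def by (simp add: field_simps)
  then show ?thesis unfolding kk_theta_def by (simp add: sum_divide_distrib[symmetric])
qed

lemma cos_prod_gpt:
  assumes "\<And>i. R $ i > 0"
  shows "cos (kk_theta R k (gpt R M j)) * cos (kk_theta R k0 (gpt R M j)) =
     (cos (2*pi*(\<Sum>i\<in>UNIV. real_of_int (int (k i) - int (k0 i)) * real (j i)) / real M)
    + cos (2*pi*(\<Sum>i\<in>UNIV. real_of_int (int (k i) + int (k0 i)) * real (j i)) / real M)) / 2"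
proof -
  define A where "A = kk_theta R k (gpt R M j)"
  define B where "B = kk_theta R k0 (gpt R M j)"
  have "2*pi*(\<Sum>i\<in>UNIV. real_of_int (int (k i) - int (k0 i)) * real (j i)) / real M = A - B"
    unfolding A_def B_def theta_gpt[OF assms]
    by (simp add: algebra_simps sum_subtractf diff_divide_distrib)
  moreover have "2*pi*(\<Sum>i\<in>UNIV. real_of_int (int (k i) + int (k0 i)) * real (j i)) / real M = A + B"
    unfolding A_def B_def theta_gpt[OF assms]
    by (simp add: algebra_simps sum.distrib add_divide_distrib)
  ultimately show ?thesis unfolding A_def[symmetric] B_def[symmetric]
    by (simp add: cos_add cos_diff)
qed

lemma card_grid: "card (grid M :: ('n::finite \<Rightarrow> nat) set) = M ^ CARD('n)"
  by (simp add: grid_def card_PiE prod_constant)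

lemma finite_grid: "finite (grid M :: ('n::finite \<Rightarrow> nat) set)"
  by (simp add: grid_def finite_PiE)

lemma not_dvd_small:
  fixes x :: int
  assumes "x \<noteq> 0" "\<bar>x\<bar> < int M"
  shows "\<not> int M dvd x"
proof
  assume "int M dvd x"
  then have "\<bar>int M\<bar> \<le> \<bar>x\<bar>" by (rule dvd_imp_le_int[OF assms(1)])
  then show False using assms(2) by simp
qed


lemma core:
  fixes R :: "real^'n::finite" and c :: "('n \<Rightarrow> nat) \<Rightarrow> real"
  assumes Rpos: "\<And>i. R $ i > 0"
    and sm: "(\<lambda>k. norm (c k)) summable_on UNIV"
    and ex: "\<And>y. kk_cos_expansion R c y 0"
  shows "c k0 = 0"
proof -
  define w where "w = kk_weight R"
  define P where "P = kk_vol R"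
  have Ppos: "P > 0" unfolding P_def kk_vol_def using Rpos by (simp add: prod_pos)
  define C where "C = 1 / sqrt P + sqrt (2 / P)"
  have wpos: "w k > 0" for k unfolding w_def kk_weight_def P_def[symmetric] using Ppos by auto
  have wC: "w k \<le> C" for k unfolding w_def kk_weight_def P_def[symmetric] C_def using Ppos by auto
  have Cpos: "C > 0" using wpos[of k0] wC[of k0] by linarith
  have hsj: "((\<lambda>k. w k * c k * cos (kk_theta R k y)) has_sum 0) UNIV" for y
    using ex[of y] unfolding kk_cos_expansion_def w_def .
  have main: "\<bar>c k0\<bar> \<le> \<epsilon>" if epos: "\<epsilon> > 0" for \<epsilon>
  proof -
    define \<epsilon>1 where "\<epsilon>1 = \<epsilon> * w k0 / (2*C)"
    have e1pos: "\<epsilon>1 > 0" unfolding \<epsilon>1_def using epos wpos[of k0] Cpos by simp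
    obtain F where F: "finite F" "\<And>G. finite G \<Longrightarrow> G \<inter> F = {} \<Longrightarrow> (\<Sum>k\<in>G. \<bar>c k\<bar>) \<le> \<epsilon>1"
      using tail_small[of "\<lambda>k. \<bar>c k\<bar>", OF _ _ e1pos] sm by auto
    define F' where "F' = insert k0 F"
    have fF': "finite F'" unfolding F'_def using F by simp
    define B where "B = (\<Sum>k\<in>F'. \<Sum>i\<in>UNIV. k i)"
    have kB: "k i \<le> B" if "k \<in> F'" for k i
    proof -
      have "k i \<le> (\<Sum>i\<in>UNIV. k i)" by (rule member_le_sum) auto
      also have "\<dots> \<le> B" unfolding B_def by (rule member_le_sum) (use that fF' in auto)
      finally show ?thesis .
    qed
    define M where "M = 2*B+1"
    have Mpos: "M > 0" unfolding M_def by simp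
    define N where "N = real M ^ CARD('n)"
    have Npos: "N > 0" unfolding N_def using Mpos by simp
    define Sg where "Sg v = (\<Sum>j\<in>grid M. cos (2*pi*(\<Sum>i\<in>UNIV. real_of_int (v i) * real (j i)) / real M))" for v :: "'n \<Rightarrow> int"
    have Sg_val: "Sg v = (if \<forall>i. int M dvd v i then N else 0)" for v
      unfolding Sg_def N_def grid_def using grid_sum[OF Mpos, of v] by simp
    define T where "T k = (\<Sum>j\<in>grid M. cos (kk_theta R k (gpt R M j)) * cos (kk_theta R k0 (gpt R M j)))" for k
    have Tform: "T k = (Sg (\<lambda>i. int (k i) - int (k0 i)) + Sg (\<lambda>i. int (k i) + int (k0 i))) / 2" for k
      unfolding T_def Sg_def cos_prod_gpt[OF Rpos]
      by (simp add: sum_divide_distrib[symmetric] sum.distrib)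
    have Tabs: "\<bar>T k\<bar> \<le> N" for k
      unfolding Tform Sg_val using Npos by auto
    have hsT: "((\<lambda>k. w k * c k * T k) has_sum 0) UNIV"
    proof -
      have "((\<lambda>k. \<Sum>j\<in>grid M. w k * c k * cos (kk_theta R k (gpt R M j)) * cos (kk_theta R k0 (gpt R M j)))
           has_sum (\<Sum>j::'n\<Rightarrow>nat\<in>grid M. 0)) UNIV"
      proof (rule has_sum_fsum)
        show "finite (grid M :: ('n \<Rightarrow> nat) set)" by (rule finite_grid)
        fix j :: "'n \<Rightarrow> nat"
        show "((\<lambda>k. w k * c k * cos (kk_theta R k (gpt R M j)) * cos (kk_theta R k0 (gpt R M j))) has_sum 0) UNIV"
          using has_sum_cmult_left[OF hsj, of "gpt R M j" "cos (kk_theta R k0 (gpt R M j))"] by simp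
      qed
      moreover have "(\<Sum>j\<in>grid M. w k * c k * cos (kk_theta R k (gpt R M j)) * cos (kk_theta R k0 (gpt R M j)))
          = w k * c k * T k" for k
        unfolding T_def by (simp add: sum_distrib_left mult.assoc)
      ultimately show ?thesis by simp
    qed
    have T0: "T k = 0" if kF: "k \<in> F'" and kne: "k \<noteq> k0" for k
    proof -
      obtain i where i: "k i \<noteq> k0 i" using kne by auto
      have b1: "k i \<le> B" "k0 i \<le> B" using kB kF F'_def by auto
      have "\<not> int M dvd (int (k i) - int (k0 i))"
        by (rule not_dvd_small) (use i b1 M_def in auto)
      moreover have "\<not> int M dvd (int (k i) + int (k0 i))"
        by (rule not_dvd_small) (use i b1 M_def in auto)
      ultimately show ?thesis unfolding Tform Sg_val by auto
    qed
    have Tk0: "T k0 \<ge> N / 2"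
      unfolding Tform Sg_val using Npos by auto
    define a where "a k = w k * c k * T k" for k
    have aabs: "norm (a k) \<le> C * N * norm (c k)" for k
    proof -
      have "norm (a k) = w k * \<bar>c k\<bar> * \<bar>T k\<bar>" unfolding a_def using wpos[of k] by (simp add: abs_mult)
      also have "\<dots> \<le> C * \<bar>c k\<bar> * N"
        by (intro mult_mono wC Tabs) (use wpos[of k] Cpos in auto)
      finally show ?thesis by (simp add: algebra_simps)
    qed
    have asm: "(\<lambda>k. norm (a k)) summable_on UNIV"
      by (rule summable_on_comparison_test[OF summable_on_cmult_right[OF sm, of "C*N"]])
         (use aabs in auto)
    have asmF: "(\<lambda>k. norm (a k)) summable_on (- F')"
      by (rule summable_on_subset_banach[OF asm]) auto
    have asF: "a summable_on (- F')"
      by (rule abs_summable_summable[OF asmF])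
    have "(a has_sum (sum a F' + infsum a (- F'))) (F' \<union> - F')"
      by (rule has_sum_Un_disjoint) (use fF' asF in auto)
    then have "(a has_sum (sum a F' + infsum a (- F'))) UNIV" by simp
    moreover have "(a has_sum 0) UNIV" using hsT unfolding a_def .
    ultimately have eq0: "sum a F' + infsum a (- F') = 0" using has_sum_unique by blast
    have sF': "sum a F' = a k0"
    proof -
      have "sum a F' = a k0 + sum a (F' - {k0})"
        using fF' by (rule sum.remove) (simp add: F'_def)
      moreover have "sum a (F' - {k0}) = 0" by (rule sum.neutral) (use T0 a_def in auto)
      ultimately show ?thesis by simp
    qed
    have Ibound: "norm (infsum a (- F')) \<le> C * N * \<epsilon>1"
    proof -
      have "norm (infsum a (- F')) \<le> infsum (\<lambda>k. norm (a k)) (- F')"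
        by (rule norm_infsum_bound[OF asmF])
      also have "\<dots> \<le> C * N * \<epsilon>1"
      proof (rule infsum_le_finite_sums[OF asmF])
        fix G assume G: "finite G" "G \<subseteq> - F'"
        have "(\<Sum>k\<in>G. norm (a k)) \<le> (\<Sum>k\<in>G. C * N * norm (c k))"
          by (rule sum_mono) (rule aabs)
        also have "\<dots> = C * N * (\<Sum>k\<in>G. \<bar>c k\<bar>)" by (simp add: sum_distrib_left)
        also have "\<dots> \<le> C * N * \<epsilon>1"
          by (intro mult_left_mono F(2)) (use G F'_def Cpos Npos in auto)
        finally show "(\<Sum>k\<in>G. norm (a k)) \<le> C * N * \<epsilon>1" .
      qed
      finally show ?thesis .
    qed
    have "\<bar>a k0\<bar> \<le> C * N * \<epsilon>1" using eq0 sF' Ibound by simp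
    moreover have "\<bar>a k0\<bar> = w k0 * \<bar>c k0\<bar> * T k0"
      unfolding a_def using wpos[of k0] Tk0 Npos by (simp add: abs_mult)
    moreover have "w k0 * \<bar>c k0\<bar> * (N/2) \<le> w k0 * \<bar>c k0\<bar> * T k0"
      by (rule mult_left_mono[OF Tk0]) (use wpos[of k0] in auto)
    ultimately have "w k0 * \<bar>c k0\<bar> * (N/2) \<le> C * N * \<epsilon>1" by linarith
    also have "C * N * \<epsilon>1 = w k0 * \<epsilon> * (N/2)" unfolding \<epsilon>1_def using Cpos by (simp add: field_simps)
    finally have "w k0 * (N/2) * \<bar>c k0\<bar> \<le> w k0 * (N/2) * \<epsilon>" by (simp add: algebra_simps)
    then show ?thesis using wpos[of k0] Npos by (simp add: mult_le_cancel_left_pos)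
  qed
  show ?thesis
  proof (rule ccontr)
    assume "c k0 \<noteq> 0"
    then have "\<bar>c k0\<bar> \<le> \<bar>c k0\<bar>/2" by (intro main) auto
    then show False using \<open>c k0 \<noteq> 0\<close> by simp
  qed
qed

theorem proposition1:
  fixes N :: nat
    and R :: "real^'n::finite"
    and pi0 :: "nat \<Rightarrow> real^4 \<Rightarrow> real^'n \<Rightarrow> real"
    and pimodes :: "nat \<Rightarrow> real^4 \<Rightarrow> ('n \<Rightarrow> nat) \<Rightarrow> real"
  assumes "N \<ge> 2"
    and "\<And>i. R $ i > 0"
    and "\<And>a x. a \<in> {1..<N^2} \<Longrightarrow> (\<lambda>k. norm (pimodes a x k)) summable_on UNIV"
    and "\<And>a x y. a \<in> {1..<N^2} \<Longrightarrow> kk_cos_expansion R (pimodes a x) y (pi0 a x y)"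
  shows "(\<forall>a\<in>{1..<N^2}. \<forall>x y. pi0 a x y = 0) \<longleftrightarrow>
         (\<forall>a\<in>{1..<N^2}. \<forall>x. pimodes a x (\<lambda>_. 0) = 0 \<and>
            (\<forall>k. k \<noteq> (\<lambda>_. 0) \<longrightarrow> pimodes a x k = 0))"
proof
  assume H: "\<forall>a\<in>{1..<N^2}. \<forall>x y. pi0 a x y = 0"
  show "\<forall>a\<in>{1..<N^2}. \<forall>x. pimodes a x (\<lambda>_. 0) = 0 \<and>
            (\<forall>k. k \<noteq> (\<lambda>_. 0) \<longrightarrow> pimodes a x k = 0)"
  proof (intro ballI allI)
    fix a x assume a: "a \<in> {1..<N^2}"
    have "pimodes a x k = 0" for k
    proof (rule core)
      show "\<And>i. R $ i > 0" by (rule assms(2))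
      show "(\<lambda>k. norm (pimodes a x k)) summable_on UNIV" by (rule assms(3)[OF a])
      show "kk_cos_expansion R (pimodes a x) y 0" for y
        using assms(4)[OF a, of x y] H a by simp
    qed
    then show "pimodes a x (\<lambda>_. 0) = 0 \<and> (\<forall>k. k \<noteq> (\<lambda>_. 0) \<longrightarrow> pimodes a x k = 0)" by simp
  qed
next
  assume H: "\<forall>a\<in>{1..<N^2}. \<forall>x. pimodes a x (\<lambda>_. 0) = 0 \<and>
            (\<forall>k. k \<noteq> (\<lambda>_. 0) \<longrightarrow> pimodes a x k = 0)"
  show "\<forall>a\<in>{1..<N^2}. \<forall>x y. pi0 a x y = 0"
  proof (intro ballI allI)
    fix a x y assume a: "a \<in> {1..<N^2}"
    have z: "pimodes a x k = 0" for k using H a by (cases "k = (\<lambda>_. 0)") auto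
    have "((\<lambda>k. kk_weight R k * pimodes a x k * cos (kk_theta R k y)) has_sum pi0 a x y) UNIV"
      using assms(4)[OF a, of x y] unfolding kk_cos_expansion_def .
    then have "((\<lambda>k::'n\<Rightarrow>nat. 0::real) has_sum pi0 a x y) UNIV" by (simp add: z)
    from has_sum_unique[OF this has_sum_0_simp] show "pi0 a x y = 0" .
  qed
qed

end
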